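(* Let $\mathcal G$ be a finite connected groupoid and $\alpha=(S_g,\alpha_g)_{g\in\mathcal G}$ a unital group-type partial action of $\mathcal G$ on a commutative ring $S=\bigoplus_{y\in\mathcal G_0}S_y$, with $S_g=S1_g$ and $1_g\ne0$ for all $g$. If $S^{\alpha_{\mathcal G}}\subseteq S$ is an $\alpha$-partial Galois extension, then for every $y\in\mathcal G_0$, $S_y^{\alpha_{\mathcal G(y)}}\subseteq S_y$ is an $\alpha_{\mathcal G(y)}$-partial Galois extension, where $\alpha_{\mathcal G(y)}=(S_g,\alpha_g)_{g\in\mathcal G(y)}$ is the partial action of the isotropy group $\mathcal G(y)$ on $S_y$.
   Context: A groupoid is a small category with all morphisms invertible; $\mathcal G_0$ is its object set (identified with identity morphisms), $s(g),t(g)$ source and target, $\mathcal G(x,y)=\{g:s(g)=x,t(g)=y\}$, $\mathcal G(y)=\mathcal G(y,y)$; connected means all $\mathcal G(x,y)\neq\emptyset$. A partial action $\alpha=(S_g,\alpha_g)_{g\in\mathcal G}$ on a ring $S$: for each $g$, $S_{t(g)}$ is an ideal of $S$, $S_g$ an ideal of $S_{t(g)}$, $\alpha_g:S_{g^{-1}}\to S_g$ a ring isomorphism; $\alpha_x=\mathrm{id}_{S_x}$; for composable $(g,h)$ (i.e. $s(g)=t(h)$), $\alpha_h^{-1}(S_{g^{-1}}\cap S_h)\subseteq S_{(gh)^{-1}}$ and $\alpha_g\alpha_h(a)=\alpha_{gh}(a)$ there. Unital: $S_g=S1_g$, $1_g$ central idempotent. Group-type: there exist $x\in\mathcal G_0$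 and $\tau_y\in\mathcal G(x,y)$ ($y\in\mathcal G_0$, $\tau_x=x$) with $S_{\tau_y^{-1}}=S_x$, $S_{\tau_y}=S_y$ for all $y$. For a partial action $\beta=(A_g,\beta_g)_{g\in\mathcal K}$ of a groupoid (or group) $\mathcal K$ on a ring $A$, $A^{\beta}=\{a\in A:\beta_g(a1_{g^{-1}})=a1_g\ \forall g\in\mathcal K\}$, and $A^\beta\subseteq A$ is a $\beta$-partial Galois extension if there exist $m\ge1$, $a_i,b_i\in A$ with $\sum_{i=1}^m a_i\beta_g(b_i1_{g^{-1}})=\delta_{z,g}1_z$ for all $z\in\mathcal K_0$, $g\in\mathcal K$, i.e. the sum equals $1_g$ if $g$ is an identity and $0$ otherwise. *)

theory Defs
  imports Main
begin

text \<open>A groupoid given by its set of morphisms, its set of objects (identified with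
identity morphisms), source, target, (partial) composition and inverse.
Composition  mult g h  is meaningful when  src g = tgt h  (first h, then g).\<close>

record 'g groupoid =
  carr :: "'g set"
  obj  :: "'g set"
  src  :: "'g \<Rightarrow> 'g"
  tgt  :: "'g \<Rightarrow> 'g"
  mult :: "'g \<Rightarrow> 'g \<Rightarrow> 'g"
  ginv :: "'g \<Rightarrow> 'g"

definition groupoid :: "('g, 'b) groupoid_scheme \<Rightarrow> bool" where
  "groupoid \<Gamma> \<longleftrightarrow>
     obj \<Gamma> \<subseteq> carr \<Gamma> \<and>
     (\<forall>g\<in>carr \<Gamma>. src \<Gamma> g \<in> obj \<Gamma> \<and> tgt \<Gamma> g \<in> obj \<Gamma>) \<and>
     (\<forall>x\<in>obj \<Gamma>. src \<Gamma> x = x \<and> tgt \<Gamma> x = x) \<and>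
     (\<forall>g\<in>carr \<Gamma>. \<forall>h\<in>carr \<Gamma>. src \<Gamma> g = tgt \<Gamma> h \<longrightarrow>
        mult \<Gamma> g h \<in> carr \<Gamma> \<and> src \<Gamma> (mult \<Gamma> g h) = src \<Gamma> h \<and>
        tgt \<Gamma> (mult \<Gamma> g h) = tgt \<Gamma> g) \<and>
     (\<forall>f\<in>carr \<Gamma>. \<forall>g\<in>carr \<Gamma>. \<forall>h\<in>carr \<Gamma>.
        src \<Gamma> f = tgt \<Gamma> g \<longrightarrow> src \<Gamma> g = tgt \<Gamma> h \<longrightarrow>
        mult \<Gamma> (mult \<Gamma> f g) h = mult \<Gamma> f (mult \<Gamma> g h)) \<and>
     (\<forall>g\<in>carr \<Gamma>. mult \<Gamma> g (src \<Gamma> g) = g \<and> mult \<Gamma> (tgt \<Gamma> g) g = g) \<and>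
     (\<forall>g\<in>carr \<Gamma>. ginv \<Gamma> g \<in> carr \<Gamma> \<and>
        src \<Gamma> (ginv \<Gamma> g) = tgt \<Gamma> g \<and> tgt \<Gamma> (ginv \<Gamma> g) = src \<Gamma> g \<and>
        mult \<Gamma> g (ginv \<Gamma> g) = tgt \<Gamma> g \<and> mult \<Gamma> (ginv \<Gamma> g) g = src \<Gamma> g)"

definition hom :: "('g, 'b) groupoid_scheme \<Rightarrow> 'g \<Rightarrow> 'g \<Rightarrow> 'g set" where
  "hom \<Gamma> x y = {g\<in>carr \<Gamma>. src \<Gamma> g = x \<and> tgt \<Gamma> g = y}"

definition isotropy :: "('g, 'b) groupoid_scheme \<Rightarrow> 'g \<Rightarrow> 'g set" where
  "isotropy \<Gamma> y = hom \<Gamma> y y"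

definition connected_groupoid :: "('g, 'b) groupoid_scheme \<Rightarrow> bool" where
  "connected_groupoid \<Gamma> \<longleftrightarrow> (\<forall>x\<in>obj \<Gamma>. \<forall>y\<in>obj \<Gamma>. hom \<Gamma> x y \<noteq> {})"

definition ideal_in :: "'a::comm_ring_1 set \<Rightarrow> 'a set \<Rightarrow> bool" where
  "ideal_in I J \<longleftrightarrow> I \<subseteq> J \<and> 0 \<in> I \<and>
     (\<forall>a\<in>I. \<forall>b\<in>I. a + b \<in> I) \<and> (\<forall>a\<in>I. - a \<in> I) \<and>
     (\<forall>r\<in>J. \<forall>a\<in>I. r * a \<in> I)"

text \<open>Partial action (S_g, alpha_g) of the groupoid on the ring S = UNIV :: 'a.\<close>
definition partial_action ::
  "('g, 'b) groupoid_scheme \<Rightarrow> ('g \<Rightarrow> 'a::comm_ring_1 set) \<Rightarrow> ('g \<Rightarrow> 'a \<Rightarrow> 'a) \<Rightarrow> bool" where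
  "partial_action \<Gamma> D \<alpha> \<longleftrightarrow>
     (\<forall>g\<in>carr \<Gamma>. ideal_in (D (tgt \<Gamma> g)) UNIV \<and> ideal_in (D g) (D (tgt \<Gamma> g))) \<and>
     (\<forall>g\<in>carr \<Gamma>. bij_betw (\<alpha> g) (D (ginv \<Gamma> g)) (D g) \<and>
        (\<forall>a\<in>D (ginv \<Gamma> g). \<forall>b\<in>D (ginv \<Gamma> g).
           \<alpha> g (a + b) = \<alpha> g a + \<alpha> g b \<and> \<alpha> g (a * b) = \<alpha> g a * \<alpha> g b)) \<and>
     (\<forall>x\<in>obj \<Gamma>. \<forall>a\<in>D x. \<alpha> x a = a) \<and>
     (\<forall>g\<in>carr \<Gamma>. \<forall>h\<in>carr \<Gamma>. src \<Gamma> g = tgt \<Gamma> h \<longrightarrow>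
        (\<forall>a\<in>D (ginv \<Gamma> h). \<alpha> h a \<in> D (ginv \<Gamma> g) \<inter> D h \<longrightarrow>
           a \<in> D (ginv \<Gamma> (mult \<Gamma> g h)) \<and> \<alpha> g (\<alpha> h a) = \<alpha> (mult \<Gamma> g h) a))"

definition unital_pa ::
  "('g, 'b) groupoid_scheme \<Rightarrow> ('g \<Rightarrow> 'a::comm_ring_1 set) \<Rightarrow> ('g \<Rightarrow> 'a) \<Rightarrow> bool" where
  "unital_pa \<Gamma> D e \<longleftrightarrow>
     (\<forall>g\<in>carr \<Gamma>. D g = {a * e g | a. True} \<and> e g * e g = e g)"

definition group_type ::
  "('g, 'b) groupoid_scheme \<Rightarrow> ('g \<Rightarrow> 'a set) \<Rightarrow> bool" where
  "group_type \<Gamma> D \<longleftrightarrow>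
     (\<exists>x\<in>obj \<Gamma>. \<exists>\<tau>. \<tau> x = x \<and>
        (\<forall>y\<in>obj \<Gamma>. \<tau> y \<in> hom \<Gamma> x y \<and>
           D (ginv \<Gamma> (\<tau> y)) = D x \<and> D (\<tau> y) = D y))"

text \<open>S = (direct sum over y in G_0 of S_y), S_y = S 1_y: the 1_y are pairwise
orthogonal idempotents summing to 1.\<close>
definition direct_sum_decomp ::
  "('g, 'b) groupoid_scheme \<Rightarrow> ('g \<Rightarrow> 'a::comm_ring_1) \<Rightarrow> bool" where
  "direct_sum_decomp \<Gamma> e \<longleftrightarrow>
     (\<Sum>y\<in>obj \<Gamma>. e y) = 1 \<and>
     (\<forall>x\<in>obj \<Gamma>. \<forall>y\<in>obj \<Gamma>. x \<noteq> y \<longrightarrow> e x * e y = 0)"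

text \<open>Fixed subring A^beta of a (unital) partial action of K on A (not needed in the
statement of the Galois condition itself, recorded for reference).\<close>
definition fixed_ring ::
  "'g set \<Rightarrow> ('g \<Rightarrow> 'g) \<Rightarrow> 'a::comm_ring_1 set \<Rightarrow> ('g \<Rightarrow> 'a \<Rightarrow> 'a) \<Rightarrow> ('g \<Rightarrow> 'a) \<Rightarrow> 'a set" where
  "fixed_ring K iv A \<beta> e = {a\<in>A. \<forall>g\<in>K. \<beta> g (a * e (iv g)) = a * e g}"

text \<open>A^beta \<subseteq> A is a beta-partial Galois extension, where beta is a unital partial
action of K (with identities K0 and inverse map inv) on the ring A, given by
the maps beta_g and identities 1_g = e g.\<close>
definition partial_galois ::
  "'g set \<Rightarrow> 'g set \<Rightarrow> ('g \<Rightarrow> 'g) \<Rightarrow> 'a::comm_ring_1 set \<Rightarrow> ('g \<Rightarrow> 'a \<Rightarrow> 'a) \<Rightarrow> ('g \<Rightarrow> 'a) \<Rightarrow> bool" where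
  "partial_galois K K0 iv A \<beta> e \<longleftrightarrow>
     (\<exists>m::nat. m \<ge> 1 \<and> (\<exists>a b. (\<forall>i<m. a i \<in> A \<and> b i \<in> A) \<and>
        (\<forall>g\<in>K. (\<Sum>i<m. a i * \<beta> g (b i * e (iv g))) = (if g \<in> K0 then e g else 0))))"

end

theory Submission
  imports Defs
begin

theorem lemma5p1:
  fixes \<Gamma> :: "'g groupoid"
    and D :: "'g \<Rightarrow> 'a::comm_ring_1 set"
    and \<alpha> :: "'g \<Rightarrow> 'a \<Rightarrow> 'a"
    and e :: "'g \<Rightarrow> 'a"
  assumes "groupoid \<Gamma>"
    and "finite (carr \<Gamma>)"
    and "connected_groupoid \<Gamma>"
    and "partial_action \<Gamma> D \<alpha>"
    and "unital_pa \<Gamma> D e"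
    and "\<forall>g\<in>carr \<Gamma>. e g \<noteq> 0"
    and "group_type \<Gamma> D"
    and "direct_sum_decomp \<Gamma> e"
    and "partial_galois (carr \<Gamma>) (obj \<Gamma>) (ginv \<Gamma>) UNIV \<alpha> e"
  shows "\<forall>y\<in>obj \<Gamma>. partial_galois (isotropy \<Gamma> y) {y} (ginv \<Gamma>) (D y) \<alpha> e"
proof
  fix y assume y: "y \<in> obj \<Gamma>"
  have G: "groupoid \<Gamma>" by fact
  have yc: "y \<in> carr \<Gamma>" using G y unfolding groupoid_def by blast
  have Dy: "D y = {a * e y | a. True}" and ey: "e y * e y = e y"
    using assms(5) yc unfolding unital_pa_def by auto
  obtain m :: nat and a b :: "nat \<Rightarrow> 'a" where m: "m \<ge> 1"
    and gal: "\<forall>g\<in>carr \<Gamma>. (\<Sum>i<m. a i * \<alpha> g (b i * e (ginv \<Gamma> g))) = (if g \<in> obj \<Gamma> then e g else 0)"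
    using assms(9) unfolding partial_galois_def by (elim exE conjE) (rule that; assumption)
  show "partial_galois (isotropy \<Gamma> y) {y} (ginv \<Gamma>) (D y) \<alpha> e"
    unfolding partial_galois_def
  proof (rule exI[of _ m], rule conjI, fact m, rule exI[of _ "\<lambda>i. a i * e y"], rule exI[of _ "\<lambda>i. b i * e y"], intro conjI)
    show "\<forall>i<m. a i * e y \<in> D y \<and> b i * e y \<in> D y" using Dy by auto
    show "\<forall>g\<in>isotropy \<Gamma> y. (\<Sum>i<m. a i * e y * \<alpha> g (b i * e y * e (ginv \<Gamma> g))) = (if g \<in> {y} then e g else 0)"
    proof
      fix g assume g: "g \<in> isotropy \<Gamma> y"
      have gc: "g \<in> carr \<Gamma>" and sg: "src \<Gamma> g = y" and tg: "tgt \<Gamma> g = y"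
        using g unfolding isotropy_def hom_def by auto
      have ic: "ginv \<Gamma> g \<in> carr \<Gamma>" and ti: "tgt \<Gamma> (ginv \<Gamma> g) = y"
        using G gc sg unfolding groupoid_def by auto
      have "e (ginv \<Gamma> g) \<in> D (ginv \<Gamma> g)"
        using assms(5) ic unfolding unital_pa_def by (metis (mono_tags, lifting) mem_Collect_eq mult_1)
      moreover have "D (ginv \<Gamma> g) \<subseteq> D y"
        using assms(4) ic ti unfolding partial_action_def ideal_in_def by metis
      ultimately have "e (ginv \<Gamma> g) \<in> D y" by blast
      then obtain c where c: "e (ginv \<Gamma> g) = c * e y" using Dy by auto
      have eq: "e y * e (ginv \<Gamma> g) = e (ginv \<Gamma> g)"
        using c ey by (metis mult.assoc mult.commute)
      have "(\<Sum>i<m. a i * e y * \<alpha> g (b i * e y * e (ginv \<Gamma> g)))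
            = e y * (\<Sum>i<m. a i * \<alpha> g (b i * e (ginv \<Gamma> g)))"
        by (simp add: sum_distrib_left eq mult.assoc mult.left_commute)
      also have "\<dots> = e y * (if g \<in> obj \<Gamma> then e g else 0)" using gal gc by simp
      also have "\<dots> = (if g \<in> {y} then e g else 0)"
      proof (cases "g \<in> obj \<Gamma>")
        case True
        then have "g = y" using G sg unfolding groupoid_def by auto
        then show ?thesis using True ey by simp
      next
        case False
        then have "g \<noteq> y" using y by auto
        then show ?thesis using False by simp
      qed
      finally show "(\<Sum>i<m. a i * e y * \<alpha> g (b i * e y * e (ginv \<Gamma> g))) = (if g \<in> {y} then e g else 0)" .
    qed
  qed
qed

end
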